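(* Let $D \in \mathbb{R}^{m \times n}$, let $Q \in \mathbb{Z}^{m\times n}$ be such that for each $j$ the $j$th column of $Q$ stores the sorting of the $j$th column of $D$, and let $(a_1,\ldots,a_p)$ be a sequence with $a_k \in \{0,\ldots,n-1\}$ for all $k$. Then QuickLexSort$(D,Q,(a_1,\ldots,a_p))$ returns the ranking vector of the lexicographical sorting of the sub-matrix of $D$ determined by the sequence of columns $(a_1,\ldots,a_p)$.
   Context: Rows of $D$ are indexed by $\{0,\ldots,m-1\}$, columns by $\{0,\ldots,n-1\}$. "The $j$th column of $Q$ stores the sorting of the $j$th column of $D$" means $(Q_{0j},\ldots,Q_{m-1,j})$ is a permutation of $\{0,\ldots,m-1\}$ with $D_{Q_{0j},j} \le \cdots \le D_{Q_{m-1,j},j}$. For a sequence of columns $(b_1,\ldots,b_q)$, the sub-matrix determined by it has row $r$ equal to $(D_{r b_1},\ldots,D_{r b_q})$; rows are compared lexicographically ($v <_{\mathrm{lex}} w$ iff $v_1<w_1$, or $v_1=w_1,\ldots,v_k=w_k$ and $v_{k+1}<w_{k+1}$ for some $k$). The ranking vector of this ordering is the unique $L \in \{0,\ldots,m-1\}^m$ such that equal rows get equal values, a lexicographically smaller row gets a strictly smaller value, and $\sum_r L_r$ is minimal (equivalently, $L_r$ is the number of distinct rows strictly lexicographically smaller than row $r$). QuickLexSortRefine$(D,Q,i,L)$: initialize integer arrays $\mathrm{IDval},\mathrm{IDvalInit},\mathrm{subID},\mathrm{newCount},\mathrm{numNewID}$ of length $m$ to zero. For $j=0,\ldots,m-1$: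 let $r := Q[j,i]$, $\ell := L[r]$; if $\mathrm{IDvalInit}[\ell]=0$, set $\mathrm{IDvalInit}[\ell]:=1$, $\mathrm{IDval}[\ell]:=D[r,i]$; otherwise if $\mathrm{IDval}[\ell]\neq D[r,i]$, set $\mathrm{IDval}[\ell]:=D[r,i]$ and increment $\mathrm{newCount}[\ell]$; then set $\mathrm{subID}[r]:=\mathrm{newCount}[\ell]$. Set $\mathrm{numNewID}[m-1]:=\sum_{j=0}^{m-2}\mathrm{newCount}[j]$ and for $j=m-2,\ldots,1$, $\mathrm{numNewID}[j]:=\mathrm{numNewID}[j+1]-\mathrm{newCount}[j]$ ($\mathrm{numNewID}[0]=0$). Return $L'$ with $L'[j]:=L[j]+\mathrm{numNewID}[L[j]]+\mathrm{subID}[j]$ for $j=0,\ldots,m-1$. QuickLexSort$(D,Q,(a_1,\ldots,a_p))$: set $L'$ to the zero vector of length $m$; for $k=1,\ldots,p$ in order, set $L' := $ QuickLexSortRefine$(D,Q,a_k,L')$; return $L'$. *)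

theory Defs
  imports Complex_Main
begin

text \<open>Matrices are functions nat => nat => _ (row, column); only indices below the
  dimensions m (rows) and n (columns) are relevant. Vectors of length m are nat => nat.\<close>

definition col_sorting :: "nat \<Rightarrow> (nat \<Rightarrow> nat \<Rightarrow> real) \<Rightarrow> (nat \<Rightarrow> nat \<Rightarrow> nat) \<Rightarrow> nat \<Rightarrow> bool" where
  "col_sorting m D Q j \<longleftrightarrow>
     bij_betw (\<lambda>k. Q k j) {..<m} {..<m} \<and>
     (\<forall>k. Suc k < m \<longrightarrow> D (Q k j) j \<le> D (Q (Suc k) j) j)"

definition lex_less :: "real list \<Rightarrow> real list \<Rightarrow> bool" where
  "lex_less v w \<longleftrightarrow>
     (\<exists>k. Suc k \<le> length v \<and> Suc k \<le> length w \<and>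
          (\<forall>i<k. v ! i = w ! i) \<and> v ! k < w ! k)"

definition sub_row :: "(nat \<Rightarrow> nat \<Rightarrow> real) \<Rightarrow> nat list \<Rightarrow> nat \<Rightarrow> real list" where
  "sub_row D bs r = map (\<lambda>b. D r b) bs"

definition ranking_vector :: "nat \<Rightarrow> (nat \<Rightarrow> nat \<Rightarrow> real) \<Rightarrow> nat list \<Rightarrow> nat \<Rightarrow> nat" where
  "ranking_vector m D bs r =
     card {sub_row D bs s | s. s < m \<and> lex_less (sub_row D bs s) (sub_row D bs r)}"

type_synonym qls_state = "(nat \<Rightarrow> real) \<times> (nat \<Rightarrow> nat) \<times> (nat \<Rightarrow> nat) \<times> (nat \<Rightarrow> nat)"

definition qls_step :: "(nat \<Rightarrow> nat \<Rightarrow> real) \<Rightarrow> (nat \<Rightarrow> nat \<Rightarrow> nat) \<Rightarrow> nat \<Rightarrow> (nat \<Rightarrow> nat)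
    \<Rightarrow> nat \<Rightarrow> qls_state \<Rightarrow> qls_state" where
  "qls_step D Q i L j st =
     (let (IDval, IDvalInit, subID, newCount) = st;
          r = Q j i; l = L r;
          (IDval', IDvalInit', newCount') =
            (if IDvalInit l = 0 then (IDval(l := D r i), IDvalInit(l := 1), newCount)
             else if IDval l \<noteq> D r i then (IDval(l := D r i), IDvalInit, newCount(l := newCount l + 1))
             else (IDval, IDvalInit, newCount))
      in (IDval', IDvalInit', subID(r := newCount' l), newCount'))"

definition quick_lex_sort_refine :: "nat \<Rightarrow> (nat \<Rightarrow> nat \<Rightarrow> real) \<Rightarrow> (nat \<Rightarrow> nat \<Rightarrow> nat)
    \<Rightarrow> nat \<Rightarrow> (nat \<Rightarrow> nat) \<Rightarrow> (nat \<Rightarrow> nat)" where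
  "quick_lex_sort_refine m D Q i L =
     (let (IDval, IDvalInit, subID, newCount) =
            fold (qls_step D Q i L) [0..<m] (\<lambda>_. 0, \<lambda>_. 0, \<lambda>_. 0, \<lambda>_. 0);
          numNewID = (\<lambda>l. \<Sum>j<l. newCount j)
      in (\<lambda>j. if j < m then L j + numNewID (L j) + subID j else 0))"

definition quick_lex_sort :: "nat \<Rightarrow> (nat \<Rightarrow> nat \<Rightarrow> real) \<Rightarrow> (nat \<Rightarrow> nat \<Rightarrow> nat)
    \<Rightarrow> nat list \<Rightarrow> (nat \<Rightarrow> nat)" where
  "quick_lex_sort m D Q as = fold (quick_lex_sort_refine m D Q) as (\<lambda>_. 0)"

end

theory Submission imports Defs "HOL-Library.List_Lexorder" begin


lemma lex_less_Cons:
  "lex_less (a # v) (b # w) \<longleftrightarrow> a < b \<or> (a = b \<and> lex_less v w)"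
proof
  assume "lex_less (a # v) (b # w)"
  then obtain k where k: "Suc k \<le> length (a#v)" "Suc k \<le> length (b#w)"
    "\<forall>i<k. (a#v) ! i = (b#w) ! i" "(a#v) ! k < (b#w) ! k"
    unfolding lex_less_def by blast
  show "a < b \<or> (a = b \<and> lex_less v w)"
  proof (cases k)
    case 0 then show ?thesis using k by simp
  next
    case (Suc k')
    have "a = b" using k(3) Suc by (metis nth_Cons_0 zero_less_Suc)
    moreover have "lex_less v w" unfolding lex_less_def
      using k Suc by (intro exI[of _ k']) auto
    ultimately show ?thesis by simp
  qed
next
  assume "a < b \<or> (a = b \<and> lex_less v w)"
  then show "lex_less (a # v) (b # w)"
  proof
    assume "a < b" then show ?thesis unfolding lex_less_def by (intro exI[of _ 0]) auto
  next
    assume "a = b \<and> lex_less v w"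
    then obtain k where k: "a = b" "Suc k \<le> length v" "Suc k \<le> length w"
      "\<forall>i<k. v ! i = w ! i" "v ! k < w ! k" unfolding lex_less_def by blast
    show ?thesis unfolding lex_less_def
    proof (intro exI[of _ "Suc k"] conjI allI impI)
      fix i assume "i < Suc k" then show "(a # v) ! i = (b # w) ! i"
        using k by (cases i) auto
    qed (use k in auto)
  qed
qed

lemma lex_less_iff: "length v = length w \<Longrightarrow> lex_less v w \<longleftrightarrow> v < w"
proof (induction v arbitrary: w)
  case Nil then show ?case by (simp add: lex_less_def)
next
  case (Cons a v) then show ?case by (cases w) (auto simp: lex_less_Cons)
qed

lemma less_append_single: "length a = length b \<Longrightarrow>
  (a @ [x] < b @ [y]) \<longleftrightarrow> a < b \<or> (a = b \<and> (x::'a::linorder) < y)"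
proof (induction a arbitrary: b)
  case Nil then show ?case by simp
next
  case (Cons c a) then show ?case by (cases b) auto
qed



definition rk :: "nat \<Rightarrow> (nat \<Rightarrow> 'a::linorder) \<Rightarrow> nat \<Rightarrow> nat" where
  "rk m k r = card (k ` {s. s < m \<and> k s < k r})"

lemma rk_mono_strict:
  assumes "s < m" "t < m" "k s < k t" shows "rk m k s < rk m k t"
proof -
  have "k ` {u. u < m \<and> k u < k s} \<subset> k ` {u. u < m \<and> k u < k t}"
  proof
    show "k ` {u. u < m \<and> k u < k s} \<subseteq> k ` {u. u < m \<and> k u < k t}"
      using assms by auto
    have "k s \<in> k ` {u. u < m \<and> k u < k t}" using assms by auto
    moreover have "k s \<notin> k ` {u. u < m \<and> k u < k s}" by auto
    ultimately show "k ` {u. u < m \<and> k u < k s} \<noteq> k ` {u. u < m \<and> k u < k t}" by blast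
  qed
  then show ?thesis unfolding rk_def by (intro psubset_card_mono) auto
qed

lemma rk_eq_iff:
  assumes "s < m" "t < m" shows "rk m k s = rk m k t \<longleftrightarrow> k s = k t"
proof
  assume e: "rk m k s = rk m k t"
  show "k s = k t"
  proof (rule ccontr)
    assume "k s \<noteq> k t"
    then consider "k s < k t" | "k t < k s" by fastforce
    then show False
    proof cases
      case 1 then show False using rk_mono_strict[OF assms 1] e by simp
    next
      case 2 then show False using rk_mono_strict[OF assms(2,1) 2] e by simp
    qed
  qed
next
  assume "k s = k t" then show "rk m k s = rk m k t" unfolding rk_def by simp
qed

lemma rk_less_iff:
  assumes "s < m" "t < m" shows "rk m k s < rk m k t \<longleftrightarrow> k s < k t"
proof
  assume l: "rk m k s < rk m k t"
  show "k s < k t"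
  proof (rule ccontr)
    assume "\<not> k s < k t"
    then consider "k s = k t" | "k t < k s" by fastforce
    then show False
    proof cases
      case 1 then show False using rk_eq_iff[OF assms, of k] l by simp
    next
      case 2 then show False using rk_mono_strict[OF assms(2,1) 2] l by simp
    qed
  qed
qed (rule rk_mono_strict[OF assms])

lemma exists_rank_elem:
  fixes A :: "'a::linorder set"
  assumes "finite A" "l < card A" shows "\<exists>c\<in>A. card {x\<in>A. x < c} = l"
  using assms
proof (induction "card A" arbitrary: A)
  case 0 then show ?case by simp
next
  case (Suc n)
  have ne: "A \<noteq> {}" using Suc by auto
  define M where "M = Max A"
  have M: "M \<in> A" "\<forall>x\<in>A. x \<le> M" using Suc.prems ne by (auto simp: M_def)
  have cardA: "card (A - {M}) = n" using Suc M by simp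
  show ?case
  proof (cases "l = n")
    case True
    have "{x\<in>A. x < M} = A - {M}" using M by auto
    then show ?thesis using M cardA True by (intro bexI[of _ M]) auto
  next
    case False
    then have "l < card (A - {M})" using cardA Suc by simp
    then obtain c where c: "c \<in> A - {M}" "card {x\<in>A - {M}. x < c} = l"
      using Suc.hyps(1)[of "A - {M}"] cardA Suc.prems by auto
    have "{x\<in>A. x < c} = {x\<in>A - {M}. x < c}" using c M by auto
    then show ?thesis using c by (intro bexI[of _ c]) auto
  qed
qed

lemma rk_dense:
  assumes "r < m" "l < rk m k r" shows "\<exists>s<m. rk m k s = l"
proof -
  let ?A = "k ` {s. s < m \<and> k s < k r}"
  obtain c where c: "c \<in> ?A" "card {x\<in>?A. x < c} = l"
    using exists_rank_elem[of ?A l] assms unfolding rk_def by auto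
  then obtain s where s: "s < m" "k s < k r" "c = k s" by auto
  have "k ` {u. u < m \<and> k u < k s} = {x\<in>?A. x < c}" using s by auto
  then show ?thesis using s c unfolding rk_def by auto
qed

lemma card_image_same_kernel_le:
  assumes "\<forall>s\<in>S. \<forall>t\<in>S. f s = f t \<longleftrightarrow> g s = g t" "finite S"
  shows "card (g ` S) \<le> card (f ` S)"
proof -
  have "g ` S = (\<lambda>x. g (inv_into S f x)) ` (f ` S)"
  proof -
    have "g (inv_into S f (f s)) = g s" if "s \<in> S" for s
      using that assms(1)
      by (meson f_inv_into_f image_eqI inv_into_into)
    then show ?thesis by (auto simp: image_image)
  qed
  then show ?thesis using card_image_le assms(2) by (metis finite_imageI)
qed

lemma card_image_same_kernel:
  assumes "\<forall>s\<in>S. \<forall>t\<in>S. f s = f t \<longleftrightarrow> g s = g t" "finite S"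
  shows "card (f ` S) = card (g ` S)"
  using card_image_same_kernel_le[of S f g] card_image_same_kernel_le[of S g f] assms
  by (metis le_antisym)

lemma rk_combine:
  fixes k :: "nat \<Rightarrow> 'a::linorder" and v :: "nat \<Rightarrow> 'b::linorder" and K :: "nat \<Rightarrow> 'c::linorder"
  assumes KL: "\<forall>s<m. \<forall>t<m. K s < K t \<longleftrightarrow> k s < k t \<or> (k s = k t \<and> v s < v t)"
    and KE: "\<forall>s<m. \<forall>t<m. K s = K t \<longleftrightarrow> k s = k t \<and> v s = v t"
    and r: "r < m"
  shows "rk m K r = (\<Sum>l<rk m k r. card (v ` {s. s < m \<and> rk m k s = l}))
           + card (v ` {s. s < m \<and> rk m k s = rk m k r \<and> v s < v r})"
proof -
  let ?L = "rk m k"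
  let ?S = "{s. s < m \<and> K s < K r}"
  have "rk m K r = card ((\<lambda>s. (?L s, v s)) ` ?S)"
  proof -
    have "\<forall>s\<in>?S. \<forall>t\<in>?S. K s = K t \<longleftrightarrow> (?L s, v s) = (?L t, v t)"
    proof (intro ballI)
      fix s t assume "s \<in> ?S" "t \<in> ?S"
      then have "s < m" "t < m" by auto
      then show "K s = K t \<longleftrightarrow> (?L s, v s) = (?L t, v t)"
        using KE rk_eq_iff[of s m t k] by auto
    qed
    then show ?thesis unfolding rk_def[of m K]
      by (rule card_image_same_kernel) auto
  qed
  also have "(\<lambda>s. (?L s, v s)) ` ?S = Sigma {..<Suc (?L r)}
     (\<lambda>l. if l < ?L r then v ` {s. s < m \<and> ?L s = l}
          else v ` {s. s < m \<and> ?L s = ?L r \<and> v s < v r})" (is "?X = ?Y")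
  proof
    show "?X \<subseteq> ?Y"
    proof
      fix p assume "p \<in> ?X"
      then obtain s where s: "s < m" "K s < K r" "p = (?L s, v s)" by auto
      then have "k s < k r \<or> (k s = k r \<and> v s < v r)" using KL r by auto
      then have "?L s < ?L r \<or> (?L s = ?L r \<and> v s < v r)"
        using rk_less_iff[OF s(1) r] rk_eq_iff[OF s(1) r] by auto
      then show "p \<in> ?Y" unfolding s(3) using s(1)
        by (cases "?L s < ?L r") (auto intro!: image_eqI[where x=s])
    qed
  next
    show "?Y \<subseteq> ?X"
    proof
      fix p assume p: "p \<in> ?Y"
      then obtain l x where px: "p = (l, x)" "l \<le> ?L r" by (cases p) auto
      show "p \<in> ?X"
      proof (cases "l < ?L r")
        case True
        then obtain s where s: "s < m" "?L s = l" "x = v s" using p px by auto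
        then have "k s < k r" using rk_less_iff[OF s(1) r] True by auto
        then have "K s < K r" using KL s r by auto
        then have "(?L s, v s) \<in> ?X" using s(1) by (intro image_eqI[of _ _ s]) auto
        then show ?thesis using s px by simp
      next
        case False
        then obtain s where s: "s < m" "?L s = ?L r" "v s < v r" "x = v s" "l = ?L r"
          using p px by (auto split: if_splits)
        then have "k s = k r" using rk_eq_iff[OF s(1) r] by auto
        then have "K s < K r" using KL s r by auto
        then have "(?L s, v s) \<in> ?X" using s(1) by (intro image_eqI[of _ _ s]) auto
        then show ?thesis using s px by simp
      qed
    qed
  qed
  also have "card ?Y = (\<Sum>l<Suc (?L r). card (if l < ?L r then v ` {s. s < m \<and> ?L s = l}
          else v ` {s. s < m \<and> ?L s = ?L r \<and> v s < v r}))"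
    by (rule card_SigmaI) simp_all
  also have "\<dots> = (\<Sum>l<?L r. card (v ` {s. s < m \<and> ?L s = l}))
           + card (v ` {s. s < m \<and> ?L s = ?L r \<and> v s < v r})"
  proof -
    have "(\<Sum>l<?L r. card (if l < ?L r then v ` {s. s < m \<and> ?L s = l}
          else v ` {s. s < m \<and> ?L s = ?L r \<and> v s < v r})) = (\<Sum>l<?L r. card (v ` {s. s < m \<and> ?L s = l}))"
      by (rule sum.cong) auto
    then show ?thesis unfolding sum.lessThan_Suc by simp
  qed
  finally show ?thesis .
qed



definition qinv :: "(nat \<Rightarrow> real) \<Rightarrow> (nat \<Rightarrow> nat) \<Rightarrow> nat set \<Rightarrow> qls_state \<Rightarrow> bool" where
  "qinv v L P st \<longleftrightarrow> (case st of (IDval, Init, sub, nc) \<Rightarrow>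
     (\<forall>l. Init l = (if \<exists>s\<in>P. L s = l then 1 else 0)) \<and>
     (\<forall>l. (\<exists>s\<in>P. L s = l) \<longrightarrow> (\<exists>s\<in>P. L s = l \<and> IDval l = v s) \<and> (\<forall>s\<in>P. L s = l \<longrightarrow> v s \<le> IDval l)) \<and>
     (\<forall>l. nc l + (if \<exists>s\<in>P. L s = l then 1 else 0) = card ((\<lambda>s. v s) ` {s\<in>P. L s = l})) \<and>
     (\<forall>r\<in>P. sub r = card ((\<lambda>s. v s) ` {s\<in>P. L s = L r \<and> v s < v r})))"

lemma qinv_init: "qinv v L {} (\<lambda>_. 0, \<lambda>_. 0, \<lambda>_. 0, \<lambda>_. 0)"
  unfolding qinv_def by simp

lemma qinv_step:
  assumes vD: "v = (\<lambda>s. D s i)" and r_def: "r = Q t i"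
    and inv: "qinv v L P st" and fin: "finite P"
    and rP': "r \<notin> P" and le': "\<forall>s\<in>P. v s \<le> v r"
  shows "qinv v L (insert r P) (qls_step D Q i L t st)"
proof -
  obtain IDval Init sub nc where st: "st = (IDval, Init, sub, nc)" by (cases st) auto
  define l0 where "l0 = L r"
  have I1: "\<forall>l. Init l = (if \<exists>s\<in>P. L s = l then 1 else 0)"
   and I2: "\<forall>l. (\<exists>s\<in>P. L s = l) \<longrightarrow> (\<exists>s\<in>P. L s = l \<and> IDval l = v s) \<and> (\<forall>s\<in>P. L s = l \<longrightarrow> v s \<le> IDval l)"
   and I3: "\<forall>l. nc l + (if \<exists>s\<in>P. L s = l then 1 else 0) = card (v ` {s\<in>P. L s = l})"
   and I4: "\<forall>q\<in>P. sub q = card (v ` {s\<in>P. L s = L q \<and> v s < v q})"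
    using inv unfolding qinv_def st by auto
  let ?P = "insert r P"
  have other: "{s\<in>?P. L s = l} = {s\<in>P. L s = l}" if "l \<noteq> l0" for l
    using that l0_def by auto
  show ?thesis
  proof (cases "\<exists>s\<in>P. L s = l0")
    case False
    have Init0: "Init l0 = 0" using I1 False by simp
    have e: "{s\<in>P. L s = l0} = {}" using False by auto
    have h: "nc l0 + (if \<exists>s\<in>P. L s = l0 then 1 else 0) = card (v ` {s\<in>P. L s = l0})"
      using I3 by blast
    have nc0: "nc l0 = 0" using h[unfolded e] False by simp
    have res: "qls_step D Q i L t st = (IDval(l0 := v r), Init(l0 := 1), sub(r := nc l0), nc)"
      unfolding qls_step_def st using Init0 by (simp add: r_def l0_def vD Let_def)
    have cls: "{s\<in>?P. L s = l0} = {r}" using False l0_def by auto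
    show ?thesis unfolding res qinv_def
    proof (simp only: prod.case, intro conjI allI ballI impI)
      fix l show "(Init(l0 := 1)) l = (if \<exists>s\<in>?P. L s = l then 1 else 0)"
        using I1 l0_def by auto
    next
      fix l assume "\<exists>s\<in>?P. L s = l"
      show "\<exists>s\<in>?P. L s = l \<and> (IDval(l0 := v r)) l = v s"
      proof (cases "l = l0")
        case True then show ?thesis using l0_def by auto
      next
        case False then show ?thesis using I2 \<open>\<exists>s\<in>?P. L s = l\<close> l0_def by auto
      qed
    next
      fix l s assume "s \<in> ?P" "L s = l"
      then show "v s \<le> (IDval(l0 := v r)) l"
        using I2 False l0_def by (cases "l = l0") auto
    next
      fix l show "nc l + (if \<exists>s\<in>?P. L s = l then 1 else 0) = card (v ` {s\<in>?P. L s = l})"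
      proof (cases "l = l0")
        case True then show ?thesis using cls nc0 by auto
      next
        case False then show ?thesis using I3 other[OF False] l0_def by auto
      qed
    next
      fix q assume q: "q \<in> ?P"
      show "(sub(r := nc l0)) q = card (v ` {s\<in>?P. L s = L q \<and> v s < v q})"
      proof (cases "q = r")
        case True
        have e: "{s\<in>?P. L s = L q \<and> v s < v q} = {}" using cls True l0_def by auto
        show ?thesis unfolding e using True nc0 by simp
      next
        case False
        then have qP: "q \<in> P" using q by simp
        then have "L q \<noteq> l0" using \<open>\<not> (\<exists>s\<in>P. L s = l0)\<close> by auto
        then have e: "{s\<in>?P. L s = L q \<and> v s < v q} = {s\<in>P. L s = L q \<and> v s < v q}"
          using l0_def by auto
        show ?thesis unfolding e using I4 qP False by simp
      qed
    qed
  next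
    case True
    have Init1: "Init l0 = 1" using I1 True by simp
    obtain w where w: "w \<in> P" "L w = l0" "IDval l0 = v w" using I2 True by blast
    have IDle: "\<forall>s\<in>P. L s = l0 \<longrightarrow> v s \<le> IDval l0" using I2 True by blast
    have nc0: "nc l0 + 1 = card (v ` {s\<in>P. L s = l0})" using I3[rule_format, of l0] True by simp
    have finV: "finite (v ` {s\<in>P. L s = l0})" using fin by simp
    show ?thesis
    proof (cases "IDval l0 = v r")
      case False
      have lt: "IDval l0 < v r" using False w le' by (metis order.not_eq_order_implies_strict)
      have res: "qls_step D Q i L t st = (IDval(l0 := v r), Init, sub(r := nc l0 + 1), nc(l0 := nc l0 + 1))"
        unfolding qls_step_def st using Init1 False by (simp add: r_def l0_def vD Let_def)
      have cls: "v ` {s\<in>?P. L s = l0} = insert (v r) (v ` {s\<in>P. L s = l0})"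
        using l0_def by auto
      have notin: "v r \<notin> v ` {s\<in>P. L s = l0}" using IDle lt by fastforce
      show ?thesis unfolding res qinv_def
      proof (simp only: prod.case, intro conjI allI ballI impI)
        fix l show "Init l = (if \<exists>s\<in>?P. L s = l then 1 else 0)"
          using I1 l0_def True by auto
      next
        fix l assume "\<exists>s\<in>?P. L s = l"
        show "\<exists>s\<in>?P. L s = l \<and> (IDval(l0 := v r)) l = v s"
        proof (cases "l = l0")
          case True then show ?thesis using l0_def by auto
        next
          case False then show ?thesis using I2 \<open>\<exists>s\<in>?P. L s = l\<close> l0_def by auto
        qed
      next
        fix l s assume "s \<in> ?P" "L s = l"
        then show "v s \<le> (IDval(l0 := v r)) l"
          using I2 le' l0_def by (cases "l = l0") auto
      next
        fix l show "(nc(l0 := nc l0 + 1)) l + (if \<exists>s\<in>?P. L s = l then 1 else 0) = card (v ` {s\<in>?P. L s = l})"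
        proof (cases "l = l0")
          case True then show ?thesis using cls nc0 notin finV w l0_def by auto
        next
          case False then show ?thesis using I3 other[OF False] l0_def by auto
        qed
      next
        fix q assume q: "q \<in> ?P"
        show "(sub(r := nc l0 + 1)) q = card (v ` {s\<in>?P. L s = L q \<and> v s < v q})"
        proof (cases "q = r")
          case qr: True
          have e: "v ` {s\<in>?P. L s = L q \<and> v s < v q} = v ` {s\<in>P. L s = l0}"
          proof -
            have "{s\<in>?P. L s = L q \<and> v s < v q} = {s\<in>P. L s = l0}"
              using qr l0_def IDle lt by fastforce
            then show ?thesis by simp
          qed
          show ?thesis unfolding e using qr nc0 by simp
        next
          case False
          then have qP: "q \<in> P" using q by simp
          have e: "{s\<in>?P. L s = L q \<and> v s < v q} = {s\<in>P. L s = L q \<and> v s < v q}"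
          proof -
            have "\<not> (L r = L q \<and> v r < v q)"
              using IDle lt qP l0_def by fastforce
            then show ?thesis by auto
          qed
          show ?thesis unfolding e using I4 qP False by simp
        qed
      qed
    next
      case eq: True
      have res: "qls_step D Q i L t st = (IDval, Init, sub(r := nc l0), nc)"
        unfolding qls_step_def st using Init1 eq by (simp add: r_def l0_def vD Let_def)
      have vrin: "v r \<in> v ` {s\<in>P. L s = l0}" using w eq by (intro image_eqI[of _ _ w]) auto
      have "v ` {s\<in>?P. L s = l0} = insert (v r) (v ` {s\<in>P. L s = l0})"
        using l0_def by auto
      then have cls: "v ` {s\<in>?P. L s = l0} = v ` {s\<in>P. L s = l0}"
        using vrin by (simp add: insert_absorb)
      show ?thesis unfolding res qinv_def
      proof (simp only: prod.case, intro conjI allI ballI impI)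
        fix l show "Init l = (if \<exists>s\<in>?P. L s = l then 1 else 0)"
          using I1 l0_def True by auto
      next
        fix l assume "\<exists>s\<in>?P. L s = l"
        then have "\<exists>s\<in>P. L s = l" using True l0_def by auto
        then show "\<exists>s\<in>?P. L s = l \<and> IDval l = v s" using I2 by blast
      next
        fix l s assume "s \<in> ?P" "L s = l"
        then show "v s \<le> IDval l"
          using I2 eq l0_def by (cases "s = r") auto
      next
        fix l show "nc l + (if \<exists>s\<in>?P. L s = l then 1 else 0) = card (v ` {s\<in>?P. L s = l})"
        proof (cases "l = l0")
          case True then show ?thesis using cls nc0 w l0_def by auto
        next
          case False then show ?thesis using I3 other[OF False] l0_def by auto
        qed
      next
        fix q assume q: "q \<in> ?P"
        show "(sub(r := nc l0)) q = card (v ` {s\<in>?P. L s = L q \<and> v s < v q})"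
        proof (cases "q = r")
          case qr: True
          have e: "v ` {s\<in>?P. L s = L q \<and> v s < v q} = v ` {s\<in>P. L s = l0} - {v r}"
            using qr l0_def IDle eq by fastforce
          from vrin show ?thesis unfolding e using qr nc0 finV by simp
        next
          case False
          then have qP: "q \<in> P" using q by simp
          have e: "{s\<in>?P. L s = L q \<and> v s < v q} = {s\<in>P. L s = L q \<and> v s < v q}"
          proof -
            have "\<not> (L r = L q \<and> v r < v q)"
              using IDle eq qP l0_def by fastforce
            then show ?thesis by auto
          qed
          show ?thesis unfolding e using I4 qP False by simp
        qed
      qed
    qed
  qed
qed



lemma col_sorting_mono:
  assumes cs: "col_sorting m D Q i" and "j \<le> t" "t < m"
  shows "D (Q j i) i \<le> D (Q t i) i"
  using assms(2,3)
proof (induction t)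
  case 0 then show ?case by simp
next
  case (Suc t)
  show ?case
  proof (cases "j = Suc t")
    case True then show ?thesis by simp
  next
    case False
    then have "j \<le> t" using Suc by simp
    then have "D (Q j i) i \<le> D (Q t i) i" using Suc by simp
    also have "\<dots> \<le> D (Q (Suc t) i) i" using cs Suc.prems unfolding col_sorting_def by blast
    finally show ?thesis .
  qed
qed

lemma fold_qinv:
  assumes cs: "col_sorting m D Q i" and "t \<le> m"
  shows "qinv (\<lambda>s. D s i) L ((\<lambda>j. Q j i) ` {..<t})
           (fold (qls_step D Q i L) [0..<t] (\<lambda>_. 0, \<lambda>_. 0, \<lambda>_. 0, \<lambda>_. 0))"
  using assms(2)
proof (induction t)
  case 0 then show ?case using qinv_init by simp
next
  case (Suc t)
  have inj: "inj_on (\<lambda>k. Q k i) {..<m}" using cs unfolding col_sorting_def bij_betw_def by blast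
  have rP: "Q t i \<notin> (\<lambda>j. Q j i) ` {..<t}"
  proof
    assume "Q t i \<in> (\<lambda>j. Q j i) ` {..<t}"
    then obtain j where j: "j < t" "Q j i = Q t i" by auto
    have "j < m" "t < m" using j(1) Suc.prems by auto
    then have "j = t" using inj_onD[OF inj j(2)] by simp
    then show False using j(1) by simp
  qed
  have le: "\<forall>s\<in>(\<lambda>j. Q j i) ` {..<t}. D s i \<le> D (Q t i) i"
  proof
    fix s assume "s \<in> (\<lambda>j. Q j i) ` {..<t}"
    then obtain j where "j < t" "s = Q j i" by auto
    then show "D s i \<le> D (Q t i) i" using col_sorting_mono[OF cs, of j t] Suc.prems by simp
  qed
  have "qinv (\<lambda>s. D s i) L (insert (Q t i) ((\<lambda>j. Q j i) ` {..<t}))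
      (qls_step D Q i L t (fold (qls_step D Q i L) [0..<t] (\<lambda>_. 0, \<lambda>_. 0, \<lambda>_. 0, \<lambda>_. 0)))"
  proof (rule qinv_step[OF refl refl])
    show "qinv (\<lambda>s. D s i) L ((\<lambda>j. Q j i) ` {..<t})
       (fold (qls_step D Q i L) [0..<t] (\<lambda>_. 0, \<lambda>_. 0, \<lambda>_. 0, \<lambda>_. 0))"
      using Suc.IH Suc.prems by simp
  qed (use rP le in simp_all)
  moreover have "insert (Q t i) ((\<lambda>j. Q j i) ` {..<t}) = (\<lambda>j. Q j i) ` {..<Suc t}"
    by (auto simp: lessThan_Suc)
  ultimately show ?case by simp
qed

lemma refine_correct:
  fixes k :: "nat \<Rightarrow> 'a::linorder" and K :: "nat \<Rightarrow> 'c::linorder"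
  assumes cs: "col_sorting m D Q i"
    and L: "\<forall>r<m. L r = rk m k r"
    and KL: "\<forall>s<m. \<forall>t<m. K s < K t \<longleftrightarrow> k s < k t \<or> (k s = k t \<and> D s i < D t i)"
    and KE: "\<forall>s<m. \<forall>t<m. K s = K t \<longleftrightarrow> k s = k t \<and> D s i = D t i"
    and r: "r < m"
  shows "quick_lex_sort_refine m D Q i L r = rk m K r"
proof -
  let ?v = "\<lambda>s. D s i"
  obtain IDval Init sub nc where st:
    "fold (qls_step D Q i L) [0..<m] (\<lambda>_. 0, \<lambda>_. 0, \<lambda>_. 0, \<lambda>_. 0) = (IDval, Init, sub, nc)"
    by (cases "fold (qls_step D Q i L) [0..<m] (\<lambda>_. 0, \<lambda>_. 0, \<lambda>_. 0, \<lambda>_. 0)") auto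
  have img: "(\<lambda>j. Q j i) ` {..<m} = {..<m}"
    using cs unfolding col_sorting_def bij_betw_def by blast
  have inv: "qinv ?v L {..<m} (IDval, Init, sub, nc)"
    using fold_qinv[OF cs order.refl, of L] unfolding st img .
  have I3: "\<forall>l. nc l + (if \<exists>s\<in>{..<m}. L s = l then 1 else 0) = card (?v ` {s\<in>{..<m}. L s = l})"
   and I4: "\<forall>q\<in>{..<m}. sub q = card (?v ` {s\<in>{..<m}. L s = L q \<and> ?v s < ?v q})"
    using inv unfolding qinv_def by auto
  have res: "quick_lex_sort_refine m D Q i L r = L r + (\<Sum>j<L r. nc j) + sub r"
    unfolding quick_lex_sort_refine_def st using r by simp
  have sub: "sub r = card (?v ` {s. s < m \<and> rk m k s = rk m k r \<and> ?v s < ?v r})"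
  proof -
    have "{s\<in>{..<m}. L s = L r \<and> ?v s < ?v r} = {s. s < m \<and> rk m k s = rk m k r \<and> ?v s < ?v r}"
      using L r by auto
    then show ?thesis using I4 r by simp
  qed
  have cls: "nc l + 1 = card (?v ` {s. s < m \<and> rk m k s = l})" if lt: "l < rk m k r" for l
  proof -
    obtain s where s: "s < m" "rk m k s = l" using rk_dense[OF r lt] by blast
    have e: "{s\<in>{..<m}. L s = l} = {s. s < m \<and> rk m k s = l}" using L by auto
    have "\<exists>s\<in>{..<m}. L s = l" using s L by auto
    then show ?thesis using I3[rule_format, of l] unfolding e by simp
  qed
  have "(\<Sum>l<rk m k r. card (?v ` {s. s < m \<and> rk m k s = l})) = (\<Sum>l<rk m k r. nc l + 1)"
    using cls by (intro sum.cong) auto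
  also have "\<dots> = (\<Sum>l<rk m k r. nc l) + rk m k r" unfolding sum.distrib by simp
  finally have sm: "(\<Sum>l<rk m k r. card (?v ` {s. s < m \<and> rk m k s = l})) = (\<Sum>l<rk m k r. nc l) + rk m k r" .
  have "rk m K r = (\<Sum>l<rk m k r. card (?v ` {s. s < m \<and> rk m k s = l}))
           + card (?v ` {s. s < m \<and> rk m k s = rk m k r \<and> ?v s < ?v r})"
    by (rule rk_combine[OF KL KE r])
  then show ?thesis unfolding res sub using sm L r by simp
qed

lemma ranking_vector_rk: "ranking_vector m D bs r = rk m (sub_row D bs) r"
proof -
  have "{sub_row D bs s | s. s < m \<and> lex_less (sub_row D bs s) (sub_row D bs r)}
      = sub_row D bs ` {s. s < m \<and> sub_row D bs s < sub_row D bs r}"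
    using lex_less_iff[of "sub_row D bs _" "sub_row D bs r"] by (auto simp: sub_row_def)
  then show ?thesis unfolding ranking_vector_def rk_def by simp
qed

theorem mainTheorem3:
  fixes m n :: nat and D :: "nat \<Rightarrow> nat \<Rightarrow> real" and Q :: "nat \<Rightarrow> nat \<Rightarrow> nat"
    and as :: "nat list"
  assumes "\<forall>j<n. col_sorting m D Q j"
    and "\<forall>a\<in>set as. a < n"
  shows "\<forall>r<m. quick_lex_sort m D Q as r = ranking_vector m D as r"
  using assms(2)
proof (induction as rule: rev_induct)
  case Nil
  show ?case unfolding quick_lex_sort_def ranking_vector_def
    by (simp add: sub_row_def lex_less_def)
next
  case (snoc a as)
  have IH: "\<forall>r<m. quick_lex_sort m D Q as r = rk m (sub_row D as) r"
    using snoc ranking_vector_rk by simp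
  have cs: "col_sorting m D Q a" using assms(1) snoc.prems by simp
  have sr: "sub_row D (as @ [a]) s = sub_row D as s @ [D s a]" for s
    by (simp add: sub_row_def)
  have len: "length (sub_row D as s) = length (sub_row D as t)" for s t
    by (simp add: sub_row_def)
  have KL: "\<forall>s<m. \<forall>t<m. sub_row D (as @ [a]) s < sub_row D (as @ [a]) t \<longleftrightarrow>
      sub_row D as s < sub_row D as t \<or> (sub_row D as s = sub_row D as t \<and> D s a < D t a)"
    unfolding sr using less_append_single[OF len] by blast
  have KE: "\<forall>s<m. \<forall>t<m. sub_row D (as @ [a]) s = sub_row D (as @ [a]) t \<longleftrightarrow>
      sub_row D as s = sub_row D as t \<and> D s a = D t a"
    unfolding sr by simp
  have "quick_lex_sort m D Q (as @ [a]) = quick_lex_sort_refine m D Q a (quick_lex_sort m D Q as)"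
    unfolding quick_lex_sort_def by simp
  then show ?case
    using refine_correct[OF cs IH KL KE] ranking_vector_rk by simp
qed

end
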